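(* Let $m_1,m_2\geq1$, $m=m_1+m_2$, $j=\mathrm{diag}(I_{m_1},-I_{m_2})$, $n\in\mathbb{N}$, and let $\{A,S_0,\Pi_0\}$ be an admissible triple. Define $\Pi_k,S_k$ $(k\geq0)$ by the recursions $\Pi_{k+1}=\Pi_k+\mathrm{i} A^{-1}\Pi_k j$, $S_{k+1}=S_k+A^{-1}S_k(A^* )^{-1}+A^{-1}\Pi_k\Pi_k^*(A^* )^{-1}$. Then all $S_k$ are invertible, so that the matrices $C_k:=I_m+\Pi_k^*S_k^{-1}\Pi_k-\Pi_{k+1}^*S_{k+1}^{-1}\Pi_{k+1}$ are well defined, and they satisfy $C_k>0$ and $C_kjC_k=j$ for all $k\geq 0$. Moreover, the fundamental solution $\{W_k\}$ of the Dirac system $y_{k+1}(z)=(I_m+\mathrm{i} zjC_k)y_k(z)$ admits the representation $$W_k(z)=w_A(k,-1/z)\,(I_m+\mathrm{i} zj)^k\,w_A(0,-1/z)^{-1}\qquad(k\geq0),$$ where $w_A(k,\lambda):=I_m-\mathrm{i} j\Pi_k^*S_k^{-1}(A-\lambda I_n)^{-1}\Pi_k$ (for those $z\neq0$ at which the right-hand side is defined).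
   Context: A triple $\{A,S_0,\Pi_0\}$ is called admissible if $A$ is an invertible $n\times n$ matrix, $S_0$ is a positive definite $n\times n$ matrix, $\Pi_0$ is an $n\times m$ matrix, and $AS_0-S_0A^*=\mathrm{i}\Pi_0j\Pi_0^*$. The fundamental solution is defined by $W_0(z)=I_m$, $W_{k+1}(z)=(I_m+\mathrm{i} zjC_k)W_k(z)$. *)

theory Defs
  imports "Jordan_Normal_Form.Schur_Decomposition"
begin

abbreviation adj :: "complex mat \<Rightarrow> complex mat" where
  "adj A \<equiv> mat_adjoint A"

definition minv :: "complex mat \<Rightarrow> complex mat" where
  "minv A = (SOME B. inverts_mat A B \<and> inverts_mat B A)"

definition pos_def_mat :: "nat \<Rightarrow> complex mat \<Rightarrow> bool" where
  "pos_def_mat n S \<longleftrightarrow> S \<in> carrier_mat n n \<and> adj S = S \<and>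
     (\<forall>v \<in> carrier_vec n. v \<noteq> 0\<^sub>v n \<longrightarrow>
        Im ((S *\<^sub>v v) \<bullet>c v) = 0 \<and> Re ((S *\<^sub>v v) \<bullet>c v) > 0)"

definition jmat :: "nat \<Rightarrow> nat \<Rightarrow> complex mat" where
  "jmat m1 m2 = mat (m1 + m2) (m1 + m2)
     (\<lambda>(a, b). if a = b then (if a < m1 then 1 else -1) else 0)"

definition admissible :: "nat \<Rightarrow> nat \<Rightarrow> complex mat \<Rightarrow> complex mat \<Rightarrow> complex mat \<Rightarrow> complex mat \<Rightarrow> bool" where
  "admissible n m j A S0 Pi0 \<longleftrightarrow>
     A \<in> carrier_mat n n \<and> invertible_mat A \<and> pos_def_mat n S0 \<and> Pi0 \<in> carrier_mat n m \<and>
     A * S0 - S0 * adj A = \<i> \<cdot>\<^sub>m (Pi0 * j * adj Pi0)"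

fun Pik :: "complex mat \<Rightarrow> complex mat \<Rightarrow> complex mat \<Rightarrow> nat \<Rightarrow> complex mat" where
  "Pik j A Pi0 0 = Pi0"
| "Pik j A Pi0 (Suc k) = Pik j A Pi0 k + \<i> \<cdot>\<^sub>m (minv A * Pik j A Pi0 k * j)"

fun Sk :: "complex mat \<Rightarrow> complex mat \<Rightarrow> complex mat \<Rightarrow> complex mat \<Rightarrow> nat \<Rightarrow> complex mat" where
  "Sk j A S0 Pi0 0 = S0"
| "Sk j A S0 Pi0 (Suc k) = Sk j A S0 Pi0 k + minv A * Sk j A S0 Pi0 k * minv (adj A)
     + minv A * Pik j A Pi0 k * adj (Pik j A Pi0 k) * minv (adj A)"

definition Ck :: "nat \<Rightarrow> complex mat \<Rightarrow> complex mat \<Rightarrow> complex mat \<Rightarrow> complex mat \<Rightarrow> nat \<Rightarrow> complex mat" where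
  "Ck m j A S0 Pi0 k = 1\<^sub>m m
     + adj (Pik j A Pi0 k) * minv (Sk j A S0 Pi0 k) * Pik j A Pi0 k
     - adj (Pik j A Pi0 (Suc k)) * minv (Sk j A S0 Pi0 (Suc k)) * Pik j A Pi0 (Suc k)"

fun Wk :: "nat \<Rightarrow> complex mat \<Rightarrow> complex mat \<Rightarrow> complex mat \<Rightarrow> complex mat \<Rightarrow> nat \<Rightarrow> complex \<Rightarrow> complex mat" where
  "Wk m j A S0 Pi0 0 z = 1\<^sub>m m"
| "Wk m j A S0 Pi0 (Suc k) z =
     (1\<^sub>m m + (\<i> * z) \<cdot>\<^sub>m (j * Ck m j A S0 Pi0 k)) * Wk m j A S0 Pi0 k z"

definition wA :: "nat \<Rightarrow> nat \<Rightarrow> complex mat \<Rightarrow> complex mat \<Rightarrow> complex mat \<Rightarrow> complex mat \<Rightarrow> nat \<Rightarrow> complex \<Rightarrow> complex mat" where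
  "wA n m j A S0 Pi0 k lam = 1\<^sub>m m
     - \<i> \<cdot>\<^sub>m (j * adj (Pik j A Pi0 k) * minv (Sk j A S0 Pi0 k)
                 * minv (A - lam \<cdot>\<^sub>m 1\<^sub>m n) * Pik j A Pi0 k)"

end

theory Submission
  imports Defs
begin


declare assoc_mult_mat[simp del]

lemma adj_dims[simp]: "dim_row (adj A) = dim_col A" "dim_col (adj A) = dim_row A"
  unfolding mat_adjoint_def by auto

lemma adj_index[simp]: "i < dim_col A \<Longrightarrow> j < dim_row A \<Longrightarrow> adj A $$ (i,j) = cnj (A $$ (j,i))"
  unfolding mat_adjoint_def by (simp add: mat_of_rows_def)

lemma adj_carrier[simp]: "A \<in> carrier_mat n m \<Longrightarrow> adj A \<in> carrier_mat m n"
  by (intro carrier_matI) (simp_all add: carrier_matD)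

lemma adj_adj[simp]: "adj (adj A) = A"
  by (rule eq_matI) auto

lemma adj_mult: "dim_col A = dim_row B \<Longrightarrow> adj (A * B) = adj B * adj A"
  apply (rule eq_matI)
   apply (simp_all add: scalar_prod_def)
  by (intro sum.cong refl) (rule mult.commute)

lemma adj_add: "dim_row A = dim_row B \<Longrightarrow> dim_col A = dim_col B \<Longrightarrow> adj (A + B) = adj A + adj B"
  by (rule eq_matI) auto
lemma adj_minus: "dim_row A = dim_row B \<Longrightarrow> dim_col A = dim_col B \<Longrightarrow> adj (A - B) = adj A - adj B"
  by (rule eq_matI) auto
lemma adj_smult[simp]: "adj (c \<cdot>\<^sub>m A) = cnj c \<cdot>\<^sub>m adj A"
  by (rule eq_matI) auto
lemma adj_one[simp]: "adj (1\<^sub>m n) = 1\<^sub>m n"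
  by (rule eq_matI) auto

lemma mA: fixes A B C X Y :: "complex mat" shows "dim_col A = dim_row B \<Longrightarrow> dim_col B = dim_row C \<Longrightarrow> A * B * C = A * (B * C)"
  by (rule assoc_mult_mat[of A "dim_row A" "dim_col A" B "dim_col B" C "dim_col C"])
     (auto intro: carrier_matI)
lemma dL: fixes A B C X Y :: "complex mat" shows "dim_col A = dim_row B \<Longrightarrow> dim_row B = dim_row C \<Longrightarrow> dim_col B = dim_col C \<Longrightarrow>
   A * (B + C) = A * B + A * C"
  by (rule mult_add_distrib_mat[of A "dim_row A" "dim_col A" B "dim_col B"])
     (auto intro: carrier_matI)
lemma dR: fixes A B C X Y :: "complex mat" shows "dim_row B = dim_row C \<Longrightarrow> dim_col B = dim_col C \<Longrightarrow> dim_col B = dim_row A \<Longrightarrow>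
   (B + C) * A = B * A + C * A"
  by (rule add_mult_distrib_mat[of B "dim_row B" "dim_col B" C A "dim_col A"])
     (auto intro: carrier_matI)
lemma dLm: fixes A B C X Y :: "complex mat" shows "dim_col A = dim_row B \<Longrightarrow> dim_row B = dim_row C \<Longrightarrow> dim_col B = dim_col C \<Longrightarrow>
   A * (B - C) = A * B - A * C"
  by (rule mult_minus_distrib_mat[of A "dim_row A" "dim_col A" B "dim_col B"])
     (auto intro: carrier_matI)
lemma dRm: fixes A B C X Y :: "complex mat" shows "dim_row B = dim_row C \<Longrightarrow> dim_col B = dim_col C \<Longrightarrow> dim_col B = dim_row A \<Longrightarrow>
   (B - C) * A = B * A - C * A"
  by (rule minus_mult_distrib_mat[of B "dim_row B" "dim_col B" C A "dim_col A"])
     (auto intro: carrier_matI)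
lemma sL: fixes A B C X Y :: "complex mat" shows "dim_col A = dim_row B \<Longrightarrow> A * (c \<cdot>\<^sub>m B) = c \<cdot>\<^sub>m (A * B)"
  by (rule mult_smult_distrib[of A "dim_row A" "dim_col A" B "dim_col B"])
     (auto intro: carrier_matI)
lemma sR: fixes A B C X Y :: "complex mat" shows "dim_col A = dim_row B \<Longrightarrow> (c \<cdot>\<^sub>m A) * B = c \<cdot>\<^sub>m (A * B)"
  by (rule mult_smult_assoc_mat[of A "dim_row A" "dim_col A" B "dim_col B"])
     (auto intro: carrier_matI)
lemma ss[simp]: "c \<cdot>\<^sub>m (d \<cdot>\<^sub>m B) = (c * d) \<cdot>\<^sub>m (B :: complex mat)"
  by (rule eq_matI) (auto simp: mult.assoc)
lemma one_smult[simp]: "1 \<cdot>\<^sub>m (B :: complex mat) = B"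
  by (rule eq_matI) auto

lemmas msimps = mA dL dR dLm dRm sL sR adj_mult adj_add adj_minus

lemma mat_eqI_dims: fixes A B C X Y :: "complex mat" shows "dim_row X = dim_row Y \<Longrightarrow> dim_col X = dim_col Y \<Longrightarrow>
   (\<And>i j. i < dim_row Y \<Longrightarrow> j < dim_col Y \<Longrightarrow> X $$ (i,j) = Y $$ (i,j)) \<Longrightarrow> X = Y"
  by (rule eq_matI) auto

lemma minv_props: assumes A: "A \<in> carrier_mat n n" and inv: "invertible_mat A"
  shows "minv A \<in> carrier_mat n n" "A * minv A = 1\<^sub>m n" "minv A * A = 1\<^sub>m n"
proof -
  have ex: "\<exists>B. inverts_mat A B \<and> inverts_mat B A" using inv unfolding invertible_mat_def by blast
  have h: "inverts_mat A (minv A) \<and> inverts_mat (minv A) A"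
    unfolding minv_def by (rule someI_ex[OF ex])
  have 1: "A * minv A = 1\<^sub>m n" using h A unfolding inverts_mat_def by (simp add: carrier_matD)
  have 2: "minv A * A = 1\<^sub>m (dim_row (minv A))" using h unfolding inverts_mat_def by simp
  have c: "dim_col (minv A) = n" using arg_cong[OF 1, of dim_col] by simp
  have r: "dim_row (minv A) = n" using arg_cong[OF 2, of dim_col] A by (simp add: carrier_matD)
  show "minv A \<in> carrier_mat n n" using c r by (intro carrier_matI) auto
  show "A * minv A = 1\<^sub>m n" by (rule 1)
  show "minv A * A = 1\<^sub>m n" using 2 r by simp
qed

lemma minv_unique: assumes A: "A \<in> carrier_mat n n" and B: "B \<in> carrier_mat n n"
  and AB: "A * B = 1\<^sub>m n"
  shows "invertible_mat A" "minv A = B"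
proof -
  have BA: "B * A = 1\<^sub>m n" using mat_mult_left_right_inverse[OF A B AB] .
  show inv: "invertible_mat A" unfolding invertible_mat_def inverts_mat_def square_mat.simps
    using A B AB BA by (metis carrier_matD(1) carrier_matD(2))
  note mp = minv_props[OF A inv]
  have "minv A = minv A * (A * B)" using AB mp(1) by (simp add: carrier_matD)
  also have "\<dots> = (minv A * A) * B" using mp(1) A B by (simp add: assoc_mult_mat)
  also have "\<dots> = B" using mp(3) B by (simp add: carrier_matD)
  finally show "minv A = B" .
qed



lemma adj_sprod: assumes M: "M \<in> carrier_mat a b" and w: "w \<in> carrier_vec b" and v: "v \<in> carrier_vec a"
  shows "(M *\<^sub>v w) \<bullet>c v = w \<bullet>c (adj M *\<^sub>v v)"
proof -
  have "(M *\<^sub>v w) \<bullet>c v = (\<Sum>i<a. \<Sum>k<b. M $$ (i,k) * w $ k * cnj (v $ i))"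
    using M w v by (simp add: scalar_prod_def sum_distrib_right carrier_matD carrier_vecD lessThan_atLeast0 row_def)
  also have "\<dots> = (\<Sum>k<b. \<Sum>i<a. M $$ (i,k) * w $ k * cnj (v $ i))"
    by (rule sum.swap)
  also have "\<dots> = w \<bullet>c (adj M *\<^sub>v v)"
    using M w v by (simp add: scalar_prod_def sum_distrib_left carrier_matD carrier_vecD lessThan_atLeast0 row_def mult_ac)
  finally show ?thesis .
qed

lemma pd_iff: "pos_def_mat n S \<longleftrightarrow> S \<in> carrier_mat n n \<and> adj S = S \<and>
   (\<forall>v\<in>carrier_vec n. v \<noteq> 0\<^sub>v n \<longrightarrow> (S *\<^sub>v v) \<bullet>c v > 0)"
  unfolding pos_def_mat_def less_complex_def by auto

lemma pd_pos: "pos_def_mat n S \<Longrightarrow> v \<in> carrier_vec n \<Longrightarrow> v \<noteq> 0\<^sub>v n \<Longrightarrow> (S *\<^sub>v v) \<bullet>c v > 0"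
  unfolding pd_iff by auto

lemma pd_nonneg: assumes "pos_def_mat n S" "v \<in> carrier_vec n" shows "(S *\<^sub>v v) \<bullet>c v \<ge> 0"
proof (cases "v = 0\<^sub>v n")
  case True
  have "S \<in> carrier_mat n n" using assms unfolding pd_iff by auto
  then show ?thesis using True by simp
next
  case False then show ?thesis using pd_pos[OF assms False] by simp
qed

lemma qf_sandwich: assumes X: "X \<in> carrier_mat a b" and B: "B \<in> carrier_mat b b" and v: "v \<in> carrier_vec a"
  shows "((X * (B * adj X)) *\<^sub>v v) \<bullet>c v = (B *\<^sub>v (adj X *\<^sub>v v)) \<bullet>c (adj X *\<^sub>v v)"
proof -
  have "(X * (B * adj X)) *\<^sub>v v = X *\<^sub>v (B *\<^sub>v (adj X *\<^sub>v v))"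
    using X B v by (simp add: assoc_mult_mat_vec[of _ a b _ a] assoc_mult_mat_vec[of _ b b _ a])
  moreover have "B *\<^sub>v (adj X *\<^sub>v v) \<in> carrier_vec b"
    by (rule mult_mat_vec_carrier[OF B mult_mat_vec_carrier[OF adj_carrier[OF X] v]])
  ultimately show ?thesis using adj_sprod[OF X _ v, of "B *\<^sub>v (adj X *\<^sub>v v)"] by simp
qed

lemma qf_gram: assumes X: "X \<in> carrier_mat a b" and v: "v \<in> carrier_vec a"
  shows "((X * adj X) *\<^sub>v v) \<bullet>c v = (adj X *\<^sub>v v) \<bullet>c (adj X *\<^sub>v v)"
proof -
  have "(X * adj X) *\<^sub>v v = X *\<^sub>v (adj X *\<^sub>v v)"
    using X v by (simp add: assoc_mult_mat_vec[of _ a b _ a])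
  moreover have "adj X *\<^sub>v v \<in> carrier_vec b"
    by (rule mult_mat_vec_carrier[OF adj_carrier[OF X] v])
  ultimately show ?thesis using adj_sprod[OF X _ v, of "adj X *\<^sub>v v"] by simp
qed

lemma sprod_add3: assumes "x \<in> carrier_vec n" "y \<in> carrier_vec n" "z \<in> carrier_vec n" "v \<in> carrier_vec n"
  shows "(x + y + z) \<bullet>c v = x \<bullet>c v + y \<bullet>c v + z \<bullet>c v"
  using assms by (simp add: add_scalar_prod_distrib[of _ n])

lemma pd_invertible: assumes pd: "pos_def_mat n S" shows "invertible_mat S"
proof -
  have S: "S \<in> carrier_mat n n" using pd unfolding pd_iff by auto
  have "det S \<noteq> 0"
  proof
    assume "det S = 0"
    then obtain v where v: "v \<in> carrier_vec n" "v \<noteq> 0\<^sub>v n" "S *\<^sub>v v = 0\<^sub>v n"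
      using det_0_iff_vec_prod_zero_field[OF S] by auto
    have "(S *\<^sub>v v) \<bullet>c v > 0" using pd_pos[OF pd v(1,2)] .
    moreover have "(S *\<^sub>v v) \<bullet>c v = 0" using v by simp
    ultimately show False by simp
  qed
  from det_non_zero_imp_unit[OF S this, of "()"]
  obtain B where B: "B \<in> carrier_mat n n" "S * B = 1\<^sub>m n"
    unfolding Units_def ring_mat_def by auto
  show ?thesis using minv_unique(1)[OF S B] .
qed

lemma minv_adj: assumes A: "A \<in> carrier_mat n n" and inv: "invertible_mat A"
  shows "minv (adj A) = adj (minv A)"
proof -
  note mp = minv_props[OF A inv]
  have "adj A * adj (minv A) = 1\<^sub>m n"
    using arg_cong[OF mp(3), of adj] mp(1) A by (simp add: adj_mult carrier_matD)
  then show ?thesis using minv_unique(2)[of "adj A" n "adj (minv A)"] A mp(1) by simp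
qed

lemma pd_minv: assumes pd: "pos_def_mat n S"
  shows "minv S \<in> carrier_mat n n" "S * minv S = 1\<^sub>m n" "minv S * S = 1\<^sub>m n" "adj (minv S) = minv S"
proof -
  have S: "S \<in> carrier_mat n n" and h: "adj S = S" using pd unfolding pd_iff by auto
  note inv = pd_invertible[OF pd]
  show "minv S \<in> carrier_mat n n" "S * minv S = 1\<^sub>m n" "minv S * S = 1\<^sub>m n"
    using minv_props[OF S inv] by auto
  show "adj (minv S) = minv S" using minv_adj[OF S inv] h by simp
qed

lemma smult_mv: "dim_vec v = dim_col A \<Longrightarrow> (c \<cdot>\<^sub>m (A :: complex mat)) *\<^sub>v v = c \<cdot>\<^sub>v (A *\<^sub>v v)"
  by (rule eq_vecI) (auto simp: scalar_prod_def sum_distrib_left mult.assoc)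

lemma i_sprod: "(\<i> \<cdot>\<^sub>v (w :: complex vec)) \<bullet>c (\<i> \<cdot>\<^sub>v w) = w \<bullet>c w"
  unfolding conjugate_smult_vec by (simp add: mult.assoc[symmetric])

locale stp =
  fixes n m :: nat and A S P j :: "complex mat"
  assumes A: "A \<in> carrier_mat n n" and Ainv: "invertible_mat A"
  and Spd: "pos_def_mat n S" and P: "P \<in> carrier_mat n m" and j: "j \<in> carrier_mat m m"
  and jadj: "adj j = j" and jj: "j * j = 1\<^sub>m m"
  and lyap: "A * S - S * adj A = \<i> \<cdot>\<^sub>m (P * j * adj P)"
begin

definition "R = minv A"

lemma S: "S \<in> carrier_mat n n" and Sadj: "adj S = S"
  using Spd unfolding pos_def_mat_def by auto

lemma R: "R \<in> carrier_mat n n" "A * R = 1\<^sub>m n" "R * A = 1\<^sub>m n"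
  unfolding R_def using minv_props[OF A Ainv] by auto

lemma dims[simp]: "dim_row A = n" "dim_col A = n" "dim_row S = n" "dim_col S = n"
  "dim_row P = n" "dim_col P = m" "dim_row j = m" "dim_col j = m" "dim_row R = n" "dim_col R = n"
  using A S P j R(1) by (auto simp: carrier_matD)

lemma adjR: "adj R * adj A = 1\<^sub>m n" "adj A * adj R = 1\<^sub>m n"
  using arg_cong[OF R(2), of adj] arg_cong[OF R(3), of adj] by (auto simp: adj_mult)

lemma minv_adjA: "minv (adj A) = adj R"
  using minv_unique(2)[of "adj A" n "adj R"] adjR A R(1) by auto

lemma rel1[simp]: "A * R = 1\<^sub>m n" "R * A = 1\<^sub>m n" "adj R * adj A = 1\<^sub>m n" "adj A * adj R = 1\<^sub>m n"
  "j * j = 1\<^sub>m m" "adj j = j" "adj S = S"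
  using R adjR jj jadj Sadj by auto

lemma rel2[simp]: "dim_row Z = n \<Longrightarrow> A * (R * Z) = Z" "dim_row Z = n \<Longrightarrow> R * (A * Z) = Z"
  "dim_row Z = n \<Longrightarrow> adj R * (adj A * Z) = Z" "dim_row Z = n \<Longrightarrow> adj A * (adj R * Z) = Z"
  "dim_row Z = m \<Longrightarrow> j * (j * Z) = Z"
  by (simp_all add: mA[symmetric])

lemma lyapA: "A * S = S * adj A + \<i> \<cdot>\<^sub>m (P * (j * adj P))"
proof -
  have "A * S = (A * S - S * adj A) + S * adj A"
    by (rule mat_eqI_dims) simp_all
  also have "\<dots> = S * adj A + \<i> \<cdot>\<^sub>m (P * (j * adj P))"
    unfolding lyap by (rule mat_eqI_dims) (simp_all add: mA)
  finally show ?thesis .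
qed

lemma lyapA2: "A * S = S * adj A + \<i> \<cdot>\<^sub>m (P * (j * adj P))"
  "dim_row Z = n \<Longrightarrow> A * (S * Z) = S * (adj A * Z) + \<i> \<cdot>\<^sub>m (P * (j * (adj P * Z)))"
  using lyapA by (simp_all add: mA[symmetric] dR sR)

lemma lyapR: "R * S = S * adj R - \<i> \<cdot>\<^sub>m (R * (P * (j * (adj P * adj R))))"
proof -
  have e: "S * adj A = A * S - \<i> \<cdot>\<^sub>m (P * (j * adj P))"
    by (rule mat_eqI_dims) (simp_all add: lyapA)
  have "R * S = R * ((S * adj A) * adj R)" by (simp add: mA)
  also have "\<dots> = S * adj R - \<i> \<cdot>\<^sub>m (R * (P * (j * (adj P * adj R))))"
    unfolding e by (simp add: msimps)
  finally show ?thesis .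
qed

lemma lyapR2: "R * S = S * adj R - \<i> \<cdot>\<^sub>m (R * (P * (j * (adj P * adj R))))"
  "dim_row Z = n \<Longrightarrow> R * (S * Z) = S * (adj R * Z) - \<i> \<cdot>\<^sub>m (R * (P * (j * (adj P * (adj R * Z)))))"
  using lyapR by (simp_all add: mA[symmetric] dRm sR)

definition "Pn = P + \<i> \<cdot>\<^sub>m (R * P * j)"
definition "Sn = S + R * S * minv (adj A) + R * P * adj P * minv (adj A)"

lemma Pn_alt: "Pn = P + \<i> \<cdot>\<^sub>m (R * (P * j))"
  unfolding Pn_def by (simp add: mA)
lemma Sn_alt: "Sn = S + R * (S * adj R) + R * (P * (adj P * adj R))"
  unfolding Sn_def minv_adjA by (simp add: mA)

lemma dimsN[simp]: "dim_row Pn = n" "dim_col Pn = m" "dim_row Sn = n" "dim_col Sn = n"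
  unfolding Pn_alt Sn_alt by simp_all

lemma lyapN: "A * Sn - Sn * adj A = \<i> \<cdot>\<^sub>m (Pn * j * adj Pn)"
  unfolding Sn_alt Pn_alt
  apply (simp add: msimps lyapA2 lyapR2)
  apply ((rule mat_eqI_dims; simp del: index_mult_mat(1) add: algebra_simps)?)
  done

lemma Sn_herm: "adj Sn = Sn"
  unfolding Sn_alt by (simp add: msimps)

lemma Sn_pd: "pos_def_mat n Sn"
  unfolding pd_iff
proof (intro conjI ballI impI)
  show "Sn \<in> carrier_mat n n" by (intro carrier_matI) simp_all
  show "adj Sn = Sn" by (rule Sn_herm)
  fix v :: "complex vec" assume v: "v \<in> carrier_vec n" and v0: "v \<noteq> 0\<^sub>v n"
  have RS: "R * (S * adj R) \<in> carrier_mat n n" by (intro carrier_matI) simp_all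
  have RP: "R * (P * (adj P * adj R)) \<in> carrier_mat n n" by (intro carrier_matI) simp_all
  have e: "Sn *\<^sub>v v = S *\<^sub>v v + (R * (S * adj R)) *\<^sub>v v + (R * (P * (adj P * adj R))) *\<^sub>v v"
    unfolding Sn_alt using v S RS RP
    apply (simp add: add_mult_distrib_mat_vec[of _ n n])
    by (rule assoc_add_vec[symmetric, of _ n]) auto
  have e2: "R * (P * (adj P * adj R)) = (R * P) * adj (R * P)"
    by (simp add: msimps)
  have t1: "(S *\<^sub>v v) \<bullet>c v > 0" using pd_pos[OF Spd v v0] .
  have t2: "((R * (S * adj R)) *\<^sub>v v) \<bullet>c v \<ge> 0"
    unfolding qf_sandwich[OF R(1) S v]
    by (rule pd_nonneg[OF Spd mult_mat_vec_carrier[OF adj_carrier[OF R(1)] v]])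
  have RPc: "R * P \<in> carrier_mat n m" by (intro carrier_matI) simp_all
  have t3: "((R * (P * (adj P * adj R))) *\<^sub>v v) \<bullet>c v \<ge> 0"
    unfolding e2 qf_gram[OF RPc v] by (rule conjugate_square_ge_0_vec)
  have "(Sn *\<^sub>v v) \<bullet>c v = (S *\<^sub>v v) \<bullet>c v + ((R * (S * adj R)) *\<^sub>v v) \<bullet>c v
       + ((R * (P * (adj P * adj R))) *\<^sub>v v) \<bullet>c v"
    unfolding e using v S RS RP by (intro sprod_add3[of _ n]) auto
  then show "(Sn *\<^sub>v v) \<bullet>c v > 0" using t1 t2 t3
    by (metis add_pos_nonneg)
qed

definition "Si = minv S"
definition "Sin = minv Sn"

lemma Si: "Si \<in> carrier_mat n n" "S * Si = 1\<^sub>m n" "Si * S = 1\<^sub>m n" "adj Si = Si"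
  unfolding Si_def using pd_minv[OF Spd] by auto
lemma Sin: "Sin \<in> carrier_mat n n" "Sn * Sin = 1\<^sub>m n" "Sin * Sn = 1\<^sub>m n" "adj Sin = Sin"
  unfolding Sin_def using pd_minv[OF Sn_pd] by auto

lemma dimsSi[simp]: "dim_row Si = n" "dim_col Si = n" "dim_row Sin = n" "dim_col Sin = n"
  using Si(1) Sin(1) by (auto simp: carrier_matD)

lemma relS[simp]: "S * Si = 1\<^sub>m n" "Si * S = 1\<^sub>m n" "adj Si = Si"
  "Sn * Sin = 1\<^sub>m n" "Sin * Sn = 1\<^sub>m n" "adj Sin = Sin" "adj Sn = Sn"
  using Si Sin Sn_herm by auto

lemma relS2[simp]: "dim_row Z = n \<Longrightarrow> S * (Si * Z) = Z" "dim_row Z = n \<Longrightarrow> Si * (S * Z) = Z"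
  "dim_row Z = n \<Longrightarrow> Sn * (Sin * Z) = Z" "dim_row Z = n \<Longrightarrow> Sin * (Sn * Z) = Z"
  by (simp_all add: mA[symmetric])

lemma SnR: "dim_row Z = n \<Longrightarrow> R * (S * (adj R * Z)) = Sn * Z - S * Z - R * (P * (adj P * (adj R * Z)))"
  unfolding Sn_alt
  apply (simp add: msimps)
  apply ((rule mat_eqI_dims; simp del: index_mult_mat(1) add: algebra_simps)?)
  done

definition "C = 1\<^sub>m m + adj P * Si * P - adj Pn * Sin * Pn"
definition "E1 = Si * P - Sin * Pn"
definition "E2 = adj R * (Sin * Pn)"
definition "E3 = \<i> \<cdot>\<^sub>m j - adj P * E2"

lemma dimsC[simp]: "dim_row C = m" "dim_col C = m" "dim_row E1 = n" "dim_col E1 = m"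
  "dim_row E2 = n" "dim_col E2 = m" "dim_row E3 = m" "dim_col E3 = m"
  unfolding C_def E1_def E2_def E3_def by simp_all

lemma C_herm: "adj C = C"
  unfolding C_def
  apply (simp add: msimps)
  apply ((rule mat_eqI_dims; simp del: index_mult_mat(1) add: algebra_simps)?)
  done

lemma C_fact: "C = adj E1 * (S * E1) + adj E2 * (S * E2) + adj E3 * E3"
  unfolding C_def E1_def E2_def E3_def Pn_alt
  apply (simp add: msimps SnR)
  apply ((rule mat_eqI_dims; simp del: index_mult_mat(1) add: algebra_simps)?)
  done

lemma C_pd: "pos_def_mat m C"
  unfolding pd_iff
proof (intro conjI ballI impI)
  show "C \<in> carrier_mat m m" by (intro carrier_matI) simp_all
  show "adj C = C" by (rule C_herm)
  fix v :: "complex vec" assume v: "v \<in> carrier_vec m" and v0: "v \<noteq> 0\<^sub>v m"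
  have c1: "adj E1 * (S * E1) \<in> carrier_mat m m" by (intro carrier_matI) simp_all
  have c2: "adj E2 * (S * E2) \<in> carrier_mat m m" by (intro carrier_matI) simp_all
  have c3: "adj E3 * E3 \<in> carrier_mat m m" by (intro carrier_matI) simp_all
  have cE1: "adj E1 \<in> carrier_mat m n" "E1 \<in> carrier_mat n m" by (intro carrier_matI; simp)+
  have cE2: "adj E2 \<in> carrier_mat m n" "E2 \<in> carrier_mat n m" by (intro carrier_matI; simp)+
  have cE3: "adj E3 \<in> carrier_mat m m" "E3 \<in> carrier_mat m m" by (intro carrier_matI; simp)+
  have e: "C *\<^sub>v v = (adj E1 * (S * E1)) *\<^sub>v v + (adj E2 * (S * E2)) *\<^sub>v v + (adj E3 * E3) *\<^sub>v v"
    unfolding C_fact using v c1 c2 c3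
    apply (simp add: add_mult_distrib_mat_vec[of _ m m])
    by (rule assoc_add_vec[symmetric, of _ m]) auto
  have q: "(C *\<^sub>v v) \<bullet>c v = ((adj E1 * (S * E1)) *\<^sub>v v) \<bullet>c v + ((adj E2 * (S * E2)) *\<^sub>v v) \<bullet>c v
       + ((adj E3 * E3) *\<^sub>v v) \<bullet>c v"
    unfolding e using v c1 c2 c3 by (intro sprod_add3[of _ m]) auto
  have q1: "((adj E1 * (S * E1)) *\<^sub>v v) \<bullet>c v = (S *\<^sub>v (E1 *\<^sub>v v)) \<bullet>c (E1 *\<^sub>v v)"
    using qf_sandwich[OF cE1(1) S v] by simp
  have q2: "((adj E2 * (S * E2)) *\<^sub>v v) \<bullet>c v = (S *\<^sub>v (E2 *\<^sub>v v)) \<bullet>c (E2 *\<^sub>v v)"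
    using qf_sandwich[OF cE2(1) S v] by simp
  have q3: "((adj E3 * E3) *\<^sub>v v) \<bullet>c v = (E3 *\<^sub>v v) \<bullet>c (E3 *\<^sub>v v)"
    using qf_gram[OF cE3(1) v] by simp
  have y1: "E1 *\<^sub>v v \<in> carrier_vec n" using cE1(2) v by simp
  have y2: "E2 *\<^sub>v v \<in> carrier_vec n" using cE2(2) v by simp
  have n1: "(S *\<^sub>v (E1 *\<^sub>v v)) \<bullet>c (E1 *\<^sub>v v) \<ge> 0" by (rule pd_nonneg[OF Spd y1])
  have n3: "(E3 *\<^sub>v v) \<bullet>c (E3 *\<^sub>v v) \<ge> 0" by (rule conjugate_square_ge_0_vec)
  show "(C *\<^sub>v v) \<bullet>c v > 0"
  proof (cases "E2 *\<^sub>v v = 0\<^sub>v n")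
    case False
    have "(S *\<^sub>v (E2 *\<^sub>v v)) \<bullet>c (E2 *\<^sub>v v) > 0" by (rule pd_pos[OF Spd y2 False])
    then show ?thesis unfolding q q1 q2 q3 using n1 n3
      by (metis add_nonneg_pos add_pos_nonneg)
  next
    case True
    have n2: "(S *\<^sub>v (E2 *\<^sub>v v)) \<bullet>c (E2 *\<^sub>v v) \<ge> 0" by (rule pd_nonneg[OF Spd y2])
    have cPE: "adj P * E2 \<in> carrier_mat m m" by (intro carrier_matI) simp_all
    have cj: "\<i> \<cdot>\<^sub>m j \<in> carrier_mat m m" by (intro carrier_matI) simp_all
    have "E3 *\<^sub>v v = (\<i> \<cdot>\<^sub>m j) *\<^sub>v v - (adj P * E2) *\<^sub>v v"
      unfolding E3_def by (rule minus_mult_distrib_mat_vec[OF cj cPE v])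
    also have "(adj P * E2) *\<^sub>v v = adj P *\<^sub>v (E2 *\<^sub>v v)"
      using cE2(2) v P by (simp add: assoc_mult_mat_vec[of _ m n _ m])
    also have "\<dots> = 0\<^sub>v m" unfolding True by (rule eq_vecI) (simp_all add: scalar_prod_def)
    also have "(\<i> \<cdot>\<^sub>m j) *\<^sub>v v - 0\<^sub>v m = \<i> \<cdot>\<^sub>v (j *\<^sub>v v)"
      using j v by (simp add: smult_mv)
    finally have E3v: "E3 *\<^sub>v v = \<i> \<cdot>\<^sub>v (j *\<^sub>v v)" .
    have "(E3 *\<^sub>v v) \<bullet>c (E3 *\<^sub>v v) = (j *\<^sub>v v) \<bullet>c (j *\<^sub>v v)"
      unfolding E3v by (rule i_sprod)
    also have "\<dots> = v \<bullet>c (adj j *\<^sub>v (j *\<^sub>v v))"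
      by (rule adj_sprod[OF j v mult_mat_vec_carrier[OF j v]])
    also have "adj j *\<^sub>v (j *\<^sub>v v) = v"
      using j v by (simp add: assoc_mult_mat_vec[of _ m m _ m, symmetric])
    finally have "(E3 *\<^sub>v v) \<bullet>c (E3 *\<^sub>v v) > 0" using v v0 by simp
    then show ?thesis unfolding q q1 q2 q3 using n1 n2
      by (metis add_nonneg_nonneg add_nonneg_pos)
  qed
qed

lemma lyapSiR: "adj R * Si - Si * R = \<i> \<cdot>\<^sub>m (adj R * (Si * (P * (j * (adj P * (Si * R))))))"
proof -
  have "adj R * Si - Si * R = adj R * (Si * ((A * S - S * adj A) * (Si * R)))"
    apply (simp add: msimps)
    apply ((rule mat_eqI_dims; simp del: index_mult_mat(1) add: algebra_simps)?)
    done
  also have "\<dots> = \<i> \<cdot>\<^sub>m (adj R * (Si * (P * (j * (adj P * (Si * R))))))"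
    unfolding lyap by (simp add: msimps)
  finally show ?thesis .
qed

definition "w0 = 1\<^sub>m m - \<i> \<cdot>\<^sub>m (j * adj P * Si * minv (A - 0 \<cdot>\<^sub>m 1\<^sub>m n) * P)"

lemma A0: "A - 0 \<cdot>\<^sub>m 1\<^sub>m n = A"
  by (rule eq_matI) simp_all

lemma w0_jprop: "adj w0 * j * w0 = j"
proof -
  define N where "N = adj P * (Si * (R * P))"
  have dN[simp]: "dim_row N = m" "dim_col N = m" unfolding N_def by simp_all
  have w0: "w0 = 1\<^sub>m m - \<i> \<cdot>\<^sub>m (j * N)"
    unfolding w0_def A0 N_def R_def[symmetric] by (simp add: msimps)
  have "adj N - N = adj P * ((adj R * Si - Si * R) * P)"
    unfolding N_def
    apply (simp add: msimps)
    apply ((rule mat_eqI_dims; simp del: index_mult_mat(1) add: algebra_simps)?)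
    done
  also have "\<dots> = \<i> \<cdot>\<^sub>m (adj N * (j * N))"
    unfolding lyapSiR N_def by (simp add: msimps)
  finally have key: "adj N - N = \<i> \<cdot>\<^sub>m (adj N * (j * N))" .
  have "adj w0 * j * w0 = j + \<i> \<cdot>\<^sub>m (adj N - N) + adj N * (j * N)"
    unfolding w0
    apply (simp add: msimps)
    apply ((rule mat_eqI_dims; simp del: index_mult_mat(1) add: algebra_simps)?)
    done
  also have "\<dots> = j"
    unfolding key
    apply (simp add: msimps)
    apply ((rule mat_eqI_dims; simp del: index_mult_mat(1) add: algebra_simps)?)
    done
  finally show ?thesis .
qed

end

lemma sub_zero_eq: fixes X Y :: "complex mat"
  assumes "X - Y = 0\<^sub>m (dim_row Y) (dim_col Y)" "dim_row X = dim_row Y" "dim_col X = dim_col Y"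
  shows "X = Y"
proof (rule eq_matI)
  fix a b assume ab: "a < dim_row Y" "b < dim_col Y"
  have "(X - Y) $$ (a,b) = 0" using assms(1) ab by simp
  then show "X $$ (a,b) = Y $$ (a,b)" using ab by simp
qed (use assms in auto)

locale stp2 = stp +
  fixes lam :: complex
  assumes Uinv: "invertible_mat (A - lam \<cdot>\<^sub>m 1\<^sub>m n)"
begin

definition "U = minv (A - lam \<cdot>\<^sub>m 1\<^sub>m n)"

lemma U: "U \<in> carrier_mat n n" "(A - lam \<cdot>\<^sub>m 1\<^sub>m n) * U = 1\<^sub>m n" "U * (A - lam \<cdot>\<^sub>m 1\<^sub>m n) = 1\<^sub>m n"
  unfolding U_def by (rule minv_props[OF _ Uinv], intro carrier_matI, simp_all)+

lemma dimsU[simp]: "dim_row U = n" "dim_col U = n" using U(1) by (auto simp: carrier_matD)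

lemma rearr: fixes X Y Z :: "complex mat"
  assumes e: "Y - Z = X" and d: "dim_row Y = dim_row X" "dim_col Y = dim_col X" "dim_row Z = dim_row X" "dim_col Z = dim_col X"
  shows "Y = X + Z"
proof (rule eq_matI)
  fix a b assume ab: "a < dim_row (X + Z)" "b < dim_col (X + Z)"
  have "(Y - Z) $$ (a,b) = X $$ (a,b)" using e by simp
  then show "Y $$ (a,b) = (X + Z) $$ (a,b)" using ab d by (simp add: algebra_simps)
qed (use d in auto)

lemma AU: "A * U = 1\<^sub>m n + lam \<cdot>\<^sub>m U" "U * A = 1\<^sub>m n + lam \<cdot>\<^sub>m U"
proof -
  have "A * U - lam \<cdot>\<^sub>m U = (A - lam \<cdot>\<^sub>m 1\<^sub>m n) * U" by (simp add: msimps)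
  also have "\<dots> = 1\<^sub>m n" using U by simp
  finally show "A * U = 1\<^sub>m n + lam \<cdot>\<^sub>m U" by (rule rearr) simp_all
  have "U * A - lam \<cdot>\<^sub>m U = U * (A - lam \<cdot>\<^sub>m 1\<^sub>m n)" by (simp add: msimps)
  also have "\<dots> = 1\<^sub>m n" using U by simp
  finally show "U * A = 1\<^sub>m n + lam \<cdot>\<^sub>m U" by (rule rearr) simp_all
qed

lemma RU: "U * R = R * U"
proof -
  have "U * R = R * ((A * U) * R)" by (simp add: mA)
  also have "\<dots> = R * ((U * A) * R)" using AU by simp
  also have "\<dots> = R * U" by (simp add: mA)
  finally show ?thesis .
qed

lemma relU: "A * U = 1\<^sub>m n + lam \<cdot>\<^sub>m U" "dim_row Z = n \<Longrightarrow> A * (U * Z) = Z + lam \<cdot>\<^sub>m (U * Z)"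
  "U * A = 1\<^sub>m n + lam \<cdot>\<^sub>m U" "dim_row Z = n \<Longrightarrow> U * (A * Z) = Z + lam \<cdot>\<^sub>m (U * Z)"
  "U * R = R * U" "dim_row Z = n \<Longrightarrow> U * (R * Z) = R * (U * Z)"
  using AU RU by (simp_all add: mA[symmetric] dR sR)

lemma SA: "dim_row Z = n \<Longrightarrow> S * (adj A * Z) = A * (S * Z) - \<i> \<cdot>\<^sub>m (P * (j * (adj P * Z)))"
proof -
  have e: "S * adj A = A * S - \<i> \<cdot>\<^sub>m (P * (j * adj P))"
    by (rule mat_eqI_dims) (simp_all add: lyapA)
  assume "dim_row Z = n"
  then show ?thesis
    by (simp add: mA[symmetric] e dRm sR)
qed

lemma lyapSi: "Si * A - adj A * Si = \<i> \<cdot>\<^sub>m (Si * (P * (j * (adj P * Si))))"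
proof -
  have "Si * A - adj A * Si = Si * ((A * S - S * adj A) * Si)"
    apply (simp add: msimps)
    apply ((rule mat_eqI_dims; simp del: index_mult_mat(1) add: algebra_simps)?)
    done
  also have "\<dots> = \<i> \<cdot>\<^sub>m (Si * (P * (j * (adj P * Si))))"
    unfolding lyap by (simp add: msimps)
  finally show ?thesis .
qed

lemma SiA: "dim_row Z = n \<Longrightarrow> Si * (A * Z) = \<i> \<cdot>\<^sub>m (Si * (P * (j * (adj P * (Si * Z))))) + adj A * (Si * Z)"
proof -
  have e: "Si * A = \<i> \<cdot>\<^sub>m (Si * (P * (j * (adj P * Si)))) + adj A * Si"
    by (rule rearr[OF lyapSi]) simp_all
  assume "dim_row Z = n"
  then show ?thesis
    by (simp add: mA[symmetric] e dR sR)
qed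

lemma I1: "U * (A * P) + U * (R * P) = Sn * (adj A * (Si * (U * P))) + \<i> \<cdot>\<^sub>m (Pn * (j * (adj P * (Si * (U * P)))))"
  unfolding Sn_alt Pn_alt
  apply (simp add: msimps SA relU)
  apply ((rule mat_eqI_dims; simp del: index_mult_mat(1) add: algebra_simps)?)
  done

lemma Eid: "adj Pn * (Sin * (A * (U * Pn))) - \<i> \<cdot>\<^sub>m (adj Pn * (Sin * (U * (Pn * j))))
  = adj P * (Si * (A * (U * P))) - \<i> \<cdot>\<^sub>m (C * (j * (adj P * (Si * (U * P)))))"
proof -
  have "adj Pn * (Sin * (A * (U * Pn))) - \<i> \<cdot>\<^sub>m (adj Pn * (Sin * (U * (Pn * j))))
     = adj Pn * (Sin * (U * (A * P) + U * (R * P)))"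
    unfolding Pn_alt
    apply (simp add: msimps relU)
    apply ((rule mat_eqI_dims; simp del: index_mult_mat(1) add: algebra_simps)?)
    done
  also have "\<dots> = adj Pn * (Sin * (Sn * (adj A * (Si * (U * P))) + \<i> \<cdot>\<^sub>m (Pn * (j * (adj P * (Si * (U * P)))))))"
    unfolding I1 ..
  also have "\<dots> = adj Pn * (adj A * (Si * (U * P))) + \<i> \<cdot>\<^sub>m (adj Pn * (Sin * (Pn * (j * (adj P * (Si * (U * P)))))))"
    apply (simp add: msimps)
    apply ((rule mat_eqI_dims; simp del: index_mult_mat(1) add: algebra_simps)?)
    done
  also have "\<dots> = adj P * (Si * (A * (U * P))) - \<i> \<cdot>\<^sub>m (C * (j * (adj P * (Si * (U * P)))))"
    unfolding C_def Pn_alt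
    apply (simp add: msimps SiA)
    apply ((rule mat_eqI_dims; simp del: index_mult_mat(1) add: algebra_simps)?)
    done
  finally show ?thesis .
qed

definition "wl = 1\<^sub>m m - \<i> \<cdot>\<^sub>m (j * adj P * Si * U * P)"
definition "wln = 1\<^sub>m m - \<i> \<cdot>\<^sub>m (j * adj Pn * Sin * U * Pn)"

lemma main_id: "wln * (lam \<cdot>\<^sub>m 1\<^sub>m m - \<i> \<cdot>\<^sub>m j) = (lam \<cdot>\<^sub>m 1\<^sub>m m - \<i> \<cdot>\<^sub>m (j * C)) * wl"
proof (rule sub_zero_eq)
  have "wln * (lam \<cdot>\<^sub>m 1\<^sub>m m - \<i> \<cdot>\<^sub>m j) - (lam \<cdot>\<^sub>m 1\<^sub>m m - \<i> \<cdot>\<^sub>m (j * C)) * wl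
    = (- \<i>) \<cdot>\<^sub>m (j * ((adj Pn * (Sin * (A * (U * Pn))) - \<i> \<cdot>\<^sub>m (adj Pn * (Sin * (U * (Pn * j)))))
       - (adj P * (Si * (A * (U * P))) - \<i> \<cdot>\<^sub>m (C * (j * (adj P * (Si * (U * P))))))))"
    unfolding wl_def wln_def C_def
    apply (simp add: msimps relU)
    apply ((rule mat_eqI_dims; simp del: index_mult_mat(1) add: algebra_simps)?)
    done
  also have "\<dots> = 0\<^sub>m m m"
    unfolding Eid
    apply (simp add: msimps)
    apply (rule eq_matI; simp del: index_mult_mat(1) add: algebra_simps)
    done
  finally show "wln * (lam \<cdot>\<^sub>m 1\<^sub>m m - \<i> \<cdot>\<^sub>m j) - (lam \<cdot>\<^sub>m 1\<^sub>m m - \<i> \<cdot>\<^sub>m (j * C)) * wl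
    = 0\<^sub>m (dim_row ((lam \<cdot>\<^sub>m 1\<^sub>m m - \<i> \<cdot>\<^sub>m (j * C)) * wl)) (dim_col ((lam \<cdot>\<^sub>m 1\<^sub>m m - \<i> \<cdot>\<^sub>m (j * C)) * wl))"
    by (simp add: wl_def)
qed (simp_all add: wl_def wln_def)

end

context stp begin

lemma stp_next: "stp n m A Sn Pn j"
proof -
  have Pnc: "Pn \<in> carrier_mat n m" by (intro carrier_matI) simp_all
  show ?thesis by (rule stp.intro[OF A Ainv Sn_pd Pnc j jadj jj lyapN])
qed

lemma jprop_right: fixes w :: "complex mat"
  assumes w: "w \<in> carrier_mat m m" and h: "adj w * j * w = j"
  shows "w * j * adj w = j"
proof -
  have dw: "dim_row w = m" "dim_col w = m" using w by (simp_all add: carrier_matD)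
  have c1: "adj w * j \<in> carrier_mat m m" "w * j \<in> carrier_mat m m" by (intro carrier_matI; simp add: dw)+
  have "(adj w * j) * (w * j) = adj w * j * w * j"
    by (simp add: mA dw)
  also have "\<dots> = 1\<^sub>m m" unfolding h by simp
  finally have "(adj w * j) * (w * j) = 1\<^sub>m m" .
  then have "(w * j) * (adj w * j) = 1\<^sub>m m" by (rule mat_mult_left_right_inverse[OF c1])
  then have "(w * j) * (adj w * j) * j = j" by simp
  then show ?thesis by (simp add: mA dw)
qed

lemma CjC: "C * j * C = j"
proof -
  interpret s2: stp2 n m A S P j 0
    by unfold_locales (simp add: A0 Ainv)
  interpret nx: stp n m A Sn Pn j by (rule stp_next)
  have U0: "s2.U = R" unfolding s2.U_def R_def A0 ..
  define w where "w = w0"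
  define wn where "wn = nx.w0"
  have dw[simp]: "dim_row w = m" "dim_col w = m" "dim_row wn = m" "dim_col wn = m"
    unfolding w_def wn_def w0_def nx.w0_def by simp_all
  have wl: "s2.wl = w" unfolding w_def s2.wl_def w0_def U0 A0 R_def ..
  have wln: "s2.wln = wn" unfolding wn_def s2.wln_def nx.w0_def U0 A0 R_def nx.Si_def Sin_def ..
  have jw: "adj w * j * w = j" unfolding w_def by (rule w0_jprop)
  have jwn: "adj wn * j * wn = j" unfolding wn_def by (rule nx.w0_jprop)
  have jw': "w * j * adj w = j" by (rule jprop_right[OF _ jw]) (intro carrier_matI; simp)
  have jwn': "wn * j * adj wn = j" by (rule jprop_right[OF _ jwn]) (intro carrier_matI; simp)
  have jwZ: "dim_row Z = m \<Longrightarrow> adj w * (j * (w * Z)) = j * Z" for Z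
    using jw by (simp add: mA[symmetric])
  have jwnZ: "dim_row Z = m \<Longrightarrow> wn * (j * (adj wn * Z)) = j * Z" for Z
    using jwn' by (simp add: mA[symmetric])
  have mi: "wn * (0 \<cdot>\<^sub>m 1\<^sub>m m - \<i> \<cdot>\<^sub>m j) = (0 \<cdot>\<^sub>m 1\<^sub>m m - \<i> \<cdot>\<^sub>m (j * C)) * w"
    using s2.main_id unfolding wl wln .
  have s1: "C * w = j * (wn * j)"
  proof (rule sub_zero_eq)
    have "C * w - j * (wn * j) = (- \<i>) \<cdot>\<^sub>m (j * (wn * (0 \<cdot>\<^sub>m 1\<^sub>m m - \<i> \<cdot>\<^sub>m j))
        - j * ((0 \<cdot>\<^sub>m 1\<^sub>m m - \<i> \<cdot>\<^sub>m (j * C)) * w))"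
      apply (simp add: msimps)
      apply ((rule mat_eqI_dims; simp del: index_mult_mat(1) add: algebra_simps)?)
      done
    also have "\<dots> = 0\<^sub>m m m"
      unfolding mi
      apply (simp add: msimps)
      apply (rule eq_matI; simp del: index_mult_mat(1) add: algebra_simps)
      done
    finally show "C * w - j * (wn * j) = 0\<^sub>m (dim_row (j * (wn * j))) (dim_col (j * (wn * j)))" by simp
  qed simp_all
  have s2': "w * (j * (adj w * j)) = 1\<^sub>m m"
    using jw' by (simp add: mA[symmetric])
  have s3: "C = j * (wn * (adj w * j))"
  proof -
    have "C = C * (w * (j * (adj w * j)))" unfolding s2' by simp
    also have "\<dots> = (C * w) * (j * (adj w * j))" by (simp add: mA)
    also have "\<dots> = j * (wn * (adj w * j))" unfolding s1 by (simp add: msimps)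
    finally show ?thesis .
  qed
  have s4: "C = j * (w * (adj wn * j))"
  proof -
    have "C = adj C" using C_herm by simp
    also have "\<dots> = j * (w * (adj wn * j))" by (subst s3) (simp add: msimps)
    finally show ?thesis .
  qed
  have "C * j * C = (j * (wn * (adj w * j))) * j * (j * (w * (adj wn * j)))"
    by (rule arg_cong2[where f="\<lambda>a b. a * j * b"]) (fact s3, fact s4)
  also have "\<dots> = j"
    by (simp add: msimps jwZ jwnZ)
  finally show ?thesis .
qed

end

lemma jmat_props: "jmat m1 m2 \<in> carrier_mat (m1+m2) (m1+m2)" "adj (jmat m1 m2) = jmat m1 m2"
  "jmat m1 m2 * jmat m1 m2 = 1\<^sub>m (m1+m2)"
proof -
  show "jmat m1 m2 \<in> carrier_mat (m1+m2) (m1+m2)" unfolding jmat_def by simp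
  show "adj (jmat m1 m2) = jmat m1 m2" unfolding jmat_def by (rule eq_matI) auto
  show "jmat m1 m2 * jmat m1 m2 = 1\<^sub>m (m1+m2)"
  proof (rule eq_matI)
    fix a b assume ab: "a < dim_row (1\<^sub>m (m1+m2))" "b < dim_col (1\<^sub>m (m1+m2))"
    have "(jmat m1 m2 * jmat m1 m2) $$ (a,b) = (\<Sum>k\<in>{0..<m1+m2}. (if a = k then (if a < m1 then 1 else -1) else 0) * jmat m1 m2 $$ (k,b))"
      using ab unfolding jmat_def by (simp add: scalar_prod_def)
    also have "\<dots> = (if a < m1 then 1 else -1) * jmat m1 m2 $$ (a,b)"
      using ab by (simp add: if_distrib[of "\<lambda>x. x * _"] cong: if_cong)
    also have "\<dots> = 1\<^sub>m (m1+m2) $$ (a,b)" using ab unfolding jmat_def by auto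
    finally show "(jmat m1 m2 * jmat m1 m2) $$ (a,b) = 1\<^sub>m (m1+m2) $$ (a,b)" .
  qed (simp_all add: jmat_def)
qed

lemma pow_comm: fixes X :: "complex mat" assumes X: "X \<in> carrier_mat N N"
  shows "X * X ^\<^sub>m k = X ^\<^sub>m k * X"
proof (induction k)
  case 0 then show ?case using X by (simp add: carrier_matD)
next
  case (Suc k)
  have "X * X ^\<^sub>m Suc k = (X * X ^\<^sub>m k) * X" using X by (simp add: mA carrier_matD)
  then show ?case using Suc by simp
qed

theorem theorem2p5:
  fixes m1 m2 n :: nat and A S0 Pi0 :: "complex mat"
  assumes "m1 \<ge> 1" and "m2 \<ge> 1"
    and adm: "admissible n (m1 + m2) (jmat m1 m2) A S0 Pi0"
  shows "(\<forall>k. invertible_mat (Sk (jmat m1 m2) A S0 Pi0 k))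
    \<and> (\<forall>k. pos_def_mat (m1 + m2) (Ck (m1 + m2) (jmat m1 m2) A S0 Pi0 k))
    \<and> (\<forall>k. Ck (m1 + m2) (jmat m1 m2) A S0 Pi0 k * jmat m1 m2 * Ck (m1 + m2) (jmat m1 m2) A S0 Pi0 k
               = jmat m1 m2)
    \<and> (\<forall>k z. z \<noteq> 0 \<and> invertible_mat (A - (- 1 / z) \<cdot>\<^sub>m 1\<^sub>m n)
               \<and> invertible_mat (wA n (m1 + m2) (jmat m1 m2) A S0 Pi0 0 (- 1 / z)) \<longrightarrow>
             Wk (m1 + m2) (jmat m1 m2) A S0 Pi0 k z =
               wA n (m1 + m2) (jmat m1 m2) A S0 Pi0 k (- 1 / z)
               * (1\<^sub>m (m1 + m2) + (\<i> * z) \<cdot>\<^sub>m jmat m1 m2) ^\<^sub>m k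
               * minv (wA n (m1 + m2) (jmat m1 m2) A S0 Pi0 0 (- 1 / z)))"
proof -
  define M where "M = m1 + m2"
  define J where "J = jmat m1 m2"
  note jp = jmat_props[of m1 m2, folded M_def J_def]
  have st: "stp n M A (Sk J A S0 Pi0 k) (Pik J A Pi0 k) J" for k
  proof (induction k)
    case 0
    show ?case using adm unfolding admissible_def M_def[symmetric] J_def[symmetric]
      by (intro stp.intro) (simp_all add: jp)
  next
    case (Suc k)
    interpret st: stp n M A "Sk J A S0 Pi0 k" "Pik J A Pi0 k" J by (rule Suc)
    have "Sk J A S0 Pi0 (Suc k) = st.Sn" unfolding st.Sn_def st.R_def by simp
    moreover have "Pik J A Pi0 (Suc k) = st.Pn" unfolding st.Pn_def st.R_def by simp
    ultimately show ?case using st.stp_next by simp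
  qed
  have Ck_eq: "Ck M J A S0 Pi0 k = stp.C M A (Sk J A S0 Pi0 k) (Pik J A Pi0 k) J" for k
  proof -
    interpret st: stp n M A "Sk J A S0 Pi0 k" "Pik J A Pi0 k" J by (rule st)
    show ?thesis unfolding Ck_def st.C_def st.Si_def st.Sin_def st.Sn_def st.Pn_def st.R_def by simp
  qed
  have p1: "\<forall>k. invertible_mat (Sk J A S0 Pi0 k)"
  proof
    fix k
    interpret st: stp n M A "Sk J A S0 Pi0 k" "Pik J A Pi0 k" J by (rule st)
    show "invertible_mat (Sk J A S0 Pi0 k)" by (rule pd_invertible[OF st.Spd])
  qed
  have p2: "\<forall>k. pos_def_mat M (Ck M J A S0 Pi0 k)"
  proof
    fix k
    interpret st: stp n M A "Sk J A S0 Pi0 k" "Pik J A Pi0 k" J by (rule st)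
    show "pos_def_mat M (Ck M J A S0 Pi0 k)" unfolding Ck_eq by (rule st.C_pd)
  qed
  have p3: "\<forall>k. Ck M J A S0 Pi0 k * J * Ck M J A S0 Pi0 k = J"
  proof
    fix k
    interpret st: stp n M A "Sk J A S0 Pi0 k" "Pik J A Pi0 k" J by (rule st)
    show "Ck M J A S0 Pi0 k * J * Ck M J A S0 Pi0 k = J" unfolding Ck_eq by (rule st.CjC)
  qed
  have dP[simp]: "dim_row (Pik J A Pi0 k) = n" "dim_col (Pik J A Pi0 k) = M"
    "dim_row (Sk J A S0 Pi0 k) = n" "dim_col (Sk J A S0 Pi0 k) = n" for k
    using stp.dims[OF st[of k]] by simp_all
  have p4: "Wk M J A S0 Pi0 k z =
               wA n M J A S0 Pi0 k (- 1 / z) * (1\<^sub>m M + (\<i> * z) \<cdot>\<^sub>m J) ^\<^sub>m k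
               * minv (wA n M J A S0 Pi0 0 (- 1 / z))"
    if z: "z \<noteq> 0" and Ui: "invertible_mat (A - (- 1 / z) \<cdot>\<^sub>m 1\<^sub>m n)"
      and wi: "invertible_mat (wA n M J A S0 Pi0 0 (- 1 / z))" for k z
  proof -
    define lam where "lam = - 1 / z"
    define X where "X = 1\<^sub>m M + (\<i> * z) \<cdot>\<^sub>m J"
    define w where "w k = wA n M J A S0 Pi0 k lam" for k
    have dJ[simp]: "dim_row J = M" "dim_col J = M" using jp(1) by (auto simp: carrier_matD)
    have dX[simp]: "dim_row X = M" "dim_col X = M" unfolding X_def by simp_all
    have Xc: "X \<in> carrier_mat M M" by (intro carrier_matI) simp_all
    have dw[simp]: "dim_row (w k) = M" "dim_col (w k) = M" for k unfolding w_def wA_def by simp_all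
    have step: "(1\<^sub>m M + (\<i> * z) \<cdot>\<^sub>m (J * Ck M J A S0 Pi0 k)) * w k = w (Suc k) * X" for k
    proof -
      interpret st: stp n M A "Sk J A S0 Pi0 k" "Pik J A Pi0 k" J by (rule st)
      interpret s2: stp2 n M A "Sk J A S0 Pi0 k" "Pik J A Pi0 k" J lam
        by unfold_locales (use Ui in \<open>simp add: lam_def\<close>)
      have wk: "w k = s2.wl" unfolding w_def wA_def s2.wl_def st.Si_def s2.U_def ..
      have wk1: "w (Suc k) = s2.wln" unfolding w_def wA_def s2.wln_def st.Sin_def s2.U_def
        st.Sn_def st.Pn_def st.R_def by simp
      have Ck: "Ck M J A S0 Pi0 k = st.C" by (rule Ck_eq)
      have dwl[simp]: "dim_row s2.wl = M" "dim_col s2.wl = M" "dim_row s2.wln = M" "dim_col s2.wln = M"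
        using dw[of k] dw[of "Suc k"] unfolding wk wk1 by simp_all
      have dC[simp]: "dim_row st.C = M" "dim_col st.C = M" by (simp_all add: st.dims)
      have e1: "1\<^sub>m M + (\<i> * z) \<cdot>\<^sub>m (J * st.C) = (- z) \<cdot>\<^sub>m (lam \<cdot>\<^sub>m 1\<^sub>m M - \<i> \<cdot>\<^sub>m (J * st.C))"
        unfolding lam_def using z by (intro eq_matI) (auto simp: field_simps)
      have e2: "X = (- z) \<cdot>\<^sub>m (lam \<cdot>\<^sub>m 1\<^sub>m M - \<i> \<cdot>\<^sub>m J)"
        unfolding lam_def X_def using z by (intro eq_matI) (auto simp: field_simps)
      have "(1\<^sub>m M + (\<i> * z) \<cdot>\<^sub>m (J * Ck M J A S0 Pi0 k)) * w k
          = (- z) \<cdot>\<^sub>m ((lam \<cdot>\<^sub>m 1\<^sub>m M - \<i> \<cdot>\<^sub>m (J * st.C)) * s2.wl)"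
        unfolding Ck e1 wk by (simp add: sR)
      also have "\<dots> = (- z) \<cdot>\<^sub>m (s2.wln * (lam \<cdot>\<^sub>m 1\<^sub>m M - \<i> \<cdot>\<^sub>m J))"
        unfolding s2.main_id ..
      also have "\<dots> = w (Suc k) * X" unfolding e2 wk1 by (simp add: sL)
      finally show ?thesis .
    qed
    have w0c: "w 0 \<in> carrier_mat M M" by (intro carrier_matI) simp_all
    have mw: "minv (w 0) \<in> carrier_mat M M" using minv_props[OF w0c] wi unfolding w_def lam_def by simp
    have dmw[simp]: "dim_row (minv (w 0)) = M" "dim_col (minv (w 0)) = M" using mw by (simp_all add: carrier_matD)
    have "Wk M J A S0 Pi0 k z = w k * X ^\<^sub>m k * minv (w 0)"
    proof (induction k)
      case 0
      have "w 0 * minv (w 0) = 1\<^sub>m M" using minv_props[OF w0c] wi unfolding w_def lam_def by simp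
      then show ?case by simp
    next
      case (Suc k)
      have "Wk M J A S0 Pi0 (Suc k) z = (1\<^sub>m M + (\<i> * z) \<cdot>\<^sub>m (J * Ck M J A S0 Pi0 k)) * (w k * X ^\<^sub>m k * minv (w 0))"
        using Suc by simp
      also have "\<dots> = ((1\<^sub>m M + (\<i> * z) \<cdot>\<^sub>m (J * Ck M J A S0 Pi0 k)) * w k) * (X ^\<^sub>m k * minv (w 0))"
        by (simp add: mA Ck_def)
      also have "\<dots> = w (Suc k) * (X * X ^\<^sub>m k) * minv (w 0)"
        unfolding step by (simp add: mA)
      also have "\<dots> = w (Suc k) * X ^\<^sub>m Suc k * minv (w 0)"
        using pow_comm[OF Xc, of k] by simp
      finally show ?case .
    qed
    then show ?thesis unfolding w_def X_def lam_def .
  qed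
  show ?thesis using p1 p2 p3 p4 unfolding M_def J_def by blast
qed

end
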